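(* If $n\ge3$, then $\ker(\theta)\le FVP_n\cap FH_n$.
   Context: $FVB_n$ is the flat virtual braid group: generators $\sigma_1,\dots,\sigma_{n-1},\rho_1,\dots,\rho_{n-1}$, relations $\sigma_i\sigma_j=\sigma_j\sigma_i$, $\rho_i\rho_j=\rho_j\rho_i$, $\sigma_i\rho_j=\rho_j\sigma_i$ for $|i-j|\ge2$; $\sigma_i\sigma_{i+1}\sigma_i=\sigma_{i+1}\sigma_i\sigma_{i+1}$; $\rho_i\rho_{i+1}\rho_i=\rho_{i+1}\rho_i\rho_{i+1}$; $\rho_i\rho_{i+1}\sigma_i=\sigma_{i+1}\rho_i\rho_{i+1}$; $\rho_i^2=\sigma_i^2=1$. Let $\iota_1:FVB_n\to S_n$ send both $\sigma_i$ and $\rho_i$ to the transposition $(i,i+1)$, and $\iota_2:FVB_n\to S_n$ send $\sigma_i$ to $1$ and $\rho_i$ to $(i,i+1)$; $FVP_n=\ker\iota_1$ and $FH_n=\ker\iota_2$. $F_{2n}$ is free on $x_1,\dots,x_n,y_1,\dots,y_n$ and $\theta:FVB_n\to{\rm Aut}(F_{2n})$ is the homomorphism with $\theta(\sigma_i):x_i\mapsto x_{i+1}y_{i+1},\ x_{i+1}\mapsto x_iy_{i+1}^{-1}$ and $\theta(\rho_i):x_i\leftrightarrow x_{i+1},\ y_i\leftrightarrow y_{i+1}$, other generators fixed; automorphisms compose on the right, $(fg)(x)=g(f(x))$. *)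

theory Defs
  imports Main "HOL-Combinatorics.Transposition"
begin

text \<open>Generators sigma_i (FSig i) and rho_i (FRho i), 1 <= i <= n-1.
  Since all generators are involutions, every element of FVB_n is represented
  by a positive word in the generators.\<close>

datatype fvb_gen = FSig nat | FRho nat

fun gen_index :: "fvb_gen \<Rightarrow> nat" where
  "gen_index (FSig i) = i"
| "gen_index (FRho i) = i"

definition fvb_word :: "nat \<Rightarrow> fvb_gen list \<Rightarrow> bool" where
  "fvb_word n w \<longleftrightarrow> (\<forall>s\<in>set w. 1 \<le> gen_index s \<and> gen_index s \<le> n - 1)"

inductive fvb_rel :: "nat \<Rightarrow> fvb_gen list \<Rightarrow> fvb_gen list \<Rightarrow> bool" for n where
  comm_ss: "\<lbrakk>1 \<le> i; i \<le> n - 1; 1 \<le> j; j \<le> n - 1; i + 2 \<le> j \<or> j + 2 \<le> i\<rbrakk>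
     \<Longrightarrow> fvb_rel n [FSig i, FSig j] [FSig j, FSig i]"
| comm_rr: "\<lbrakk>1 \<le> i; i \<le> n - 1; 1 \<le> j; j \<le> n - 1; i + 2 \<le> j \<or> j + 2 \<le> i\<rbrakk>
     \<Longrightarrow> fvb_rel n [FRho i, FRho j] [FRho j, FRho i]"
| comm_sr: "\<lbrakk>1 \<le> i; i \<le> n - 1; 1 \<le> j; j \<le> n - 1; i + 2 \<le> j \<or> j + 2 \<le> i\<rbrakk>
     \<Longrightarrow> fvb_rel n [FSig i, FRho j] [FRho j, FSig i]"
| braid_s: "\<lbrakk>1 \<le> i; i + 1 \<le> n - 1\<rbrakk>
     \<Longrightarrow> fvb_rel n [FSig i, FSig (i+1), FSig i] [FSig (i+1), FSig i, FSig (i+1)]"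
| braid_r: "\<lbrakk>1 \<le> i; i + 1 \<le> n - 1\<rbrakk>
     \<Longrightarrow> fvb_rel n [FRho i, FRho (i+1), FRho i] [FRho (i+1), FRho i, FRho (i+1)]"
| mixed: "\<lbrakk>1 \<le> i; i + 1 \<le> n - 1\<rbrakk>
     \<Longrightarrow> fvb_rel n [FRho i, FRho (i+1), FSig i] [FSig (i+1), FRho i, FRho (i+1)]"
| inv_r: "\<lbrakk>1 \<le> i; i \<le> n - 1\<rbrakk> \<Longrightarrow> fvb_rel n [FRho i, FRho i] []"
| inv_s: "\<lbrakk>1 \<le> i; i \<le> n - 1\<rbrakk> \<Longrightarrow> fvb_rel n [FSig i, FSig i] []"

inductive fvb_eq :: "nat \<Rightarrow> fvb_gen list \<Rightarrow> fvb_gen list \<Rightarrow> bool" for n where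
  refl: "fvb_word n w \<Longrightarrow> fvb_eq n w w"
| rel: "\<lbrakk>fvb_word n u; fvb_word n v; fvb_rel n l r\<rbrakk> \<Longrightarrow> fvb_eq n (u @ l @ v) (u @ r @ v)"
| sym: "fvb_eq n w v \<Longrightarrow> fvb_eq n v w"
| trans: "\<lbrakk>fvb_eq n u v; fvb_eq n v w\<rbrakk> \<Longrightarrow> fvb_eq n u w"

definition fvb_class :: "nat \<Rightarrow> fvb_gen list \<Rightarrow> fvb_gen list set" where
  "fvb_class n w = {v. fvb_eq n w v}"

definition FVB :: "nat \<Rightarrow> fvb_gen list set set" where
  "FVB n = {fvb_class n w | w. fvb_word n w}"

fun iota1_gen :: "fvb_gen \<Rightarrow> nat \<Rightarrow> nat" where
  "iota1_gen (FSig i) = transpose i (i+1)"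
| "iota1_gen (FRho i) = transpose i (i+1)"

fun iota2_gen :: "fvb_gen \<Rightarrow> nat \<Rightarrow> nat" where
  "iota2_gen (FSig i) = id"
| "iota2_gen (FRho i) = transpose i (i+1)"

definition iota1 :: "fvb_gen list \<Rightarrow> nat \<Rightarrow> nat" where
  "iota1 w = foldr (\<lambda>s f. iota1_gen s \<circ> f) w id"

definition iota2 :: "fvb_gen list \<Rightarrow> nat \<Rightarrow> nat" where
  "iota2 w = foldr (\<lambda>s f. iota2_gen s \<circ> f) w id"

definition FVP :: "nat \<Rightarrow> fvb_gen list set set" where
  "FVP n = {c \<in> FVB n. \<exists>w\<in>c. iota1 w = id}"

definition FH :: "nat \<Rightarrow> fvb_gen list set set" where
  "FH n = {c \<in> FVB n. \<exists>w\<in>c. iota2 w = id}"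

datatype fletter = FX nat | FY nat

text \<open>Free group words: (a, True) is the letter a, (a, False) is a^{-1}.\<close>
type_synonym fword = "(fletter \<times> bool) list"

fun letter_index :: "fletter \<Rightarrow> nat" where
  "letter_index (FX i) = i"
| "letter_index (FY i) = i"

definition fword_on :: "nat \<Rightarrow> fword \<Rightarrow> bool" where
  "fword_on n u \<longleftrightarrow> (\<forall>(a,b)\<in>set u. 1 \<le> letter_index a \<and> letter_index a \<le> n)"

definition finv :: "fword \<Rightarrow> fword" where
  "finv u = rev (map (\<lambda>(a,b). (a, \<not> b)) u)"

definition cancel1 :: "fletter \<times> bool \<Rightarrow> fword \<Rightarrow> fword" where
  "cancel1 x ys = (case ys of [] \<Rightarrow> [x]
      | y # ys' \<Rightarrow> (if fst y = fst x \<and> snd y = (\<not> snd x) then ys' else x # ys))"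

definition freduce :: "fword \<Rightarrow> fword" where
  "freduce u = foldr cancel1 u []"

definition fsubst :: "(fletter \<Rightarrow> fword) \<Rightarrow> fword \<Rightarrow> fword" where
  "fsubst f u = concat (map (\<lambda>(a,b). if b then f a else finv (f a)) u)"

fun theta_gen :: "fvb_gen \<Rightarrow> fletter \<Rightarrow> fword" where
  "theta_gen (FSig i) (FX j) =
     (if j = i then [(FX (i+1), True), (FY (i+1), True)]
      else if j = i + 1 then [(FX i, True), (FY (i+1), False)]
      else [(FX j, True)])"
| "theta_gen (FSig i) (FY j) = [(FY j, True)]"
| "theta_gen (FRho i) (FX j) = [(FX (transpose i (i+1) j), True)]"
| "theta_gen (FRho i) (FY j) = [(FY (transpose i (i+1) j), True)]"

text \<open>theta of a word s_1 ... s_k, with right composition: (fg)(x) = g(f(x)),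
  so s_1 acts first.\<close>
definition theta_act :: "fvb_gen list \<Rightarrow> fword \<Rightarrow> fword" where
  "theta_act w u = fold (\<lambda>s v. fsubst (theta_gen s) v) w u"

definition ker_theta :: "nat \<Rightarrow> fvb_gen list set set" where
  "ker_theta n = {c \<in> FVB n. \<exists>w\<in>c. \<forall>u. fword_on n u \<longrightarrow>
       freduce (theta_act w u) = freduce u}"

end

theory Submission
  imports Defs
begin

lemma rel_word: "fvb_rel n l r \<Longrightarrow> fvb_word n l \<and> fvb_word n r"
  by (induction rule: fvb_rel.induct) (auto simp: fvb_word_def)

lemma eq_word: "fvb_eq n a b \<Longrightarrow> fvb_word n a \<and> fvb_word n b"
  by (induction rule: fvb_eq.induct) (auto simp: fvb_word_def dest!: rel_word)

fun pw1 :: "fvb_gen list \<Rightarrow> nat \<Rightarrow> nat" where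
  "pw1 [] = id"
| "pw1 (s # w) = pw1 w \<circ> iota1_gen s"

fun pw2 :: "fvb_gen list \<Rightarrow> nat \<Rightarrow> nat" where
  "pw2 [] = id"
| "pw2 (s # w) = pw2 w \<circ> iota2_gen s"

lemma iota1_cons: "iota1 (s # w) = iota1_gen s \<circ> iota1 w"
  by (simp add: iota1_def)
lemma iota2_cons: "iota2 (s # w) = iota2_gen s \<circ> iota2 w"
  by (simp add: iota2_def)

lemma gen1_inv: "iota1_gen s \<circ> iota1_gen s = id"
  by (cases s) (auto simp: fun_eq_iff)
lemma gen2_inv: "iota2_gen s \<circ> iota2_gen s = id"
  by (cases s) (auto simp: fun_eq_iff)

lemma pw1_iota1: "pw1 w \<circ> iota1 w = id"
proof (induction w)
  case Nil then show ?case by (simp add: iota1_def)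
next
  case (Cons s w)
  have "pw1 (s # w) \<circ> iota1 (s # w) = pw1 w \<circ> (iota1_gen s \<circ> iota1_gen s) \<circ> iota1 w"
    by (simp add: iota1_cons comp_assoc)
  also have "\<dots> = id" by (simp only: gen1_inv comp_id Cons.IH)
  finally show ?case .
qed

lemma pw2_iota2: "pw2 w \<circ> iota2 w = id"
proof (induction w)
  case Nil then show ?case by (simp add: iota2_def)
next
  case (Cons s w)
  have "pw2 (s # w) \<circ> iota2 (s # w) = pw2 w \<circ> (iota2_gen s \<circ> iota2_gen s) \<circ> iota2 w"
    by (simp add: iota2_cons comp_assoc)
  also have "\<dots> = id" by (simp only: gen2_inv comp_id Cons.IH)
  finally show ?case .
qed

lemma pw1_out: "fvb_word n w \<Longrightarrow> \<not> (1 \<le> j \<and> j \<le> n) \<Longrightarrow> pw1 w j = j"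
proof (induction w arbitrary: j)
  case Nil then show ?case by simp
next
  case (Cons s w)
  have "fvb_word n w" using Cons.prems by (simp add: fvb_word_def)
  moreover have "iota1_gen s j = j" using Cons.prems
    by (cases s) (auto simp: fvb_word_def transpose_def)
  ultimately show ?case using Cons by simp
qed

lemma pw2_out: "fvb_word n w \<Longrightarrow> \<not> (1 \<le> j \<and> j \<le> n) \<Longrightarrow> pw2 w j = j"
proof (induction w arbitrary: j)
  case Nil then show ?case by simp
next
  case (Cons s w)
  have "fvb_word n w" using Cons.prems by (simp add: fvb_word_def)
  moreover have "iota2_gen s j = j" using Cons.prems
    by (cases s) (auto simp: fvb_word_def transpose_def)
  ultimately show ?case using Cons by simp
qed

lemma fsubst_append: "fsubst f (u @ v) = fsubst f u @ fsubst f v"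
  by (simp add: fsubst_def)

lemma theta_cons: "theta_act (s # w) u = theta_act w (fsubst (theta_gen s) u)"
  by (simp add: theta_act_def)

lemma theta_append: "theta_act w (u @ v) = theta_act w u @ theta_act w v"
  by (induction w arbitrary: u v) (simp_all add: theta_act_def fsubst_append)

lemma theta_Cons: "theta_act w (x # v) = theta_act w [x] @ theta_act w v"
  using theta_append[of w "[x]" v] by simp

definition onlyY :: "fword \<Rightarrow> bool" where
  "onlyY u \<longleftrightarrow> (\<forall>a\<in>set u. \<exists>k. fst a = FY k)"

lemma onlyY_append: "onlyY (a @ b) = (onlyY a \<and> onlyY b)"
  by (auto simp: onlyY_def)

lemma onlyY_fsubst: "onlyY u \<Longrightarrow> onlyY (fsubst (theta_gen s) u)"
proof (induction u)
  case Nil then show ?case by (simp add: fsubst_def onlyY_def)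
next
  case (Cons a u)
  obtain k b where a: "a = (FY k, b)" using Cons.prems by (cases a) (auto simp: onlyY_def)
  have "fsubst (theta_gen s) (a # u) = fsubst (theta_gen s) [a] @ fsubst (theta_gen s) u"
    using fsubst_append[of _ "[a]" u] by simp
  moreover have "onlyY (fsubst (theta_gen s) [a])"
    using a by (cases s) (auto simp: fsubst_def finv_def onlyY_def)
  moreover have "onlyY u" using Cons.prems by (simp add: onlyY_def)
  ultimately show ?case using Cons.IH unfolding onlyY_def by auto
qed

lemma onlyY_theta: "onlyY u \<Longrightarrow> onlyY (theta_act w u)"
  by (induction w arbitrary: u) (simp_all add: theta_cons onlyY_fsubst, simp add: theta_act_def)

lemma theta_X: "\<exists>ys. theta_act w [(FX j, True)] = (FX (pw1 w j), True) # ys \<and> onlyY ys"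
proof (induction w arbitrary: j)
  case Nil then show ?case by (simp add: theta_act_def onlyY_def)
next
  case (Cons s w)
  have "\<exists>zs. fsubst (theta_gen s) [(FX j, True)] = (FX (iota1_gen s j), True) # zs \<and> onlyY zs"
  proof (cases s)
    case (FSig i)
    then show ?thesis
      by (cases "j = i"; cases "j = i + 1") (auto simp: fsubst_def onlyY_def transpose_def)
  next
    case (FRho i)
    then show ?thesis by (auto simp: fsubst_def onlyY_def)
  qed
  then obtain zs where z: "fsubst (theta_gen s) [(FX j, True)] = (FX (iota1_gen s j), True) # zs"
    and zY: "onlyY zs" by blast
  obtain ys where y: "theta_act w [(FX (iota1_gen s j), True)] = (FX (pw1 w (iota1_gen s j)), True) # ys"
    and yY: "onlyY ys" using Cons.IH by blast
  have "theta_act (s # w) [(FX j, True)] = (FX (pw1 w (iota1_gen s j)), True) # (ys @ theta_act w zs)"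
    by (simp add: theta_cons z theta_Cons[of w _ zs] y)
  moreover have "onlyY (ys @ theta_act w zs)" using yY onlyY_theta[OF zY, of w] by (simp add: onlyY_append)
  ultimately show ?case by auto
qed

lemma theta_Y: "theta_act w [(FY j, True)] = [(FY (pw2 w j), True)]"
proof (induction w arbitrary: j)
  case Nil then show ?case by (simp add: theta_act_def)
next
  case (Cons s w)
  have "fsubst (theta_gen s) [(FY j, True)] = [(FY (iota2_gen s j), True)]"
    by (cases s) (auto simp: fsubst_def)
  then show ?case by (simp add: theta_cons Cons.IH)
qed

lemma set_cancel1: "set (cancel1 x ys) \<subseteq> insert x (set ys)"
  by (auto simp: cancel1_def split: list.splits)

lemma set_freduce: "set (freduce u) \<subseteq> set u"
proof (induction u)
  case Nil then show ?case by (simp add: freduce_def)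
next
  case (Cons a u)
  have "freduce (a # u) = cancel1 a (freduce u)" by (simp add: freduce_def)
  then show ?case using set_cancel1[of a "freduce u"] Cons by auto
qed

lemma freduce_XY: "onlyY ys \<Longrightarrow> freduce ((FX a, True) # ys) = (FX a, True) # freduce ys"
proof -
  assume Y: "onlyY ys"
  have Y2: "onlyY (freduce ys)" using Y set_freduce[of ys] by (auto simp: onlyY_def)
  have "freduce ((FX a, True) # ys) = cancel1 (FX a, True) (freduce ys)" by (simp add: freduce_def)
  also have "\<dots> = (FX a, True) # freduce ys"
    using Y2 by (auto simp: cancel1_def onlyY_def split: list.splits)
  finally show ?thesis .
qed

lemma freduce_single: "freduce [x] = [x]"
  by (simp add: freduce_def cancel1_def)

theorem proposition9:
  fixes n :: nat
  assumes "n \<ge> 3"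
  shows "ker_theta n \<subseteq> FVP n \<inter> FH n"
proof
  fix c assume "c \<in> ker_theta n"
  then obtain w where cF: "c \<in> FVB n" and wc: "w \<in> c"
    and K: "\<And>u. fword_on n u \<Longrightarrow> freduce (theta_act w u) = freduce u"
    by (auto simp: ker_theta_def)
  obtain w0 where "c = fvb_class n w0" using cF by (auto simp: FVB_def)
  then have ww: "fvb_word n w" using wc eq_word by (auto simp: fvb_class_def)
  have p1: "pw1 w = id"
  proof
    fix j
    show "pw1 w j = id j"
    proof (cases "1 \<le> j \<and> j \<le> n")
      case True
      then have fo: "fword_on n [(FX j, True)]" by (simp add: fword_on_def)
      obtain ys where y: "theta_act w [(FX j, True)] = (FX (pw1 w j), True) # ys" and "onlyY ys"
        using theta_X by blast
      then have "(FX (pw1 w j), True) # freduce ys = [(FX j, True)]"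
        using K[OF fo] by (simp add: freduce_XY freduce_single)
      then show ?thesis by simp
    next
      case False then show ?thesis using pw1_out[OF ww] by simp
    qed
  qed
  have p2: "pw2 w = id"
  proof
    fix j
    show "pw2 w j = id j"
    proof (cases "1 \<le> j \<and> j \<le> n")
      case True
      then have fo: "fword_on n [(FY j, True)]" by (simp add: fword_on_def)
      then show ?thesis using K[OF fo] by (simp add: theta_Y freduce_single)
    next
      case False then show ?thesis using pw2_out[OF ww] by simp
    qed
  qed
  have "iota1 w = id" using pw1_iota1[of w] p1 by simp
  moreover have "iota2 w = id" using pw2_iota2[of w] p2 by simp
  ultimately show "c \<in> FVP n \<inter> FH n" using cF wc by (auto simp: FVP_def FH_def)
qed

end
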